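(* For any graph $G=([n],E)$ with at least one edge, $\kappa(G)=\sup_w \kappa(G,w)$, where the supremum ranges over all vectors $w\in\mathbb{R}^E$ such that $w^Tx\le 1$ is a facet-defining inequality of $\mathrm{CUT}(G)$, taken up to switching (i.e., it suffices to take one representative from each switching class of facet-defining inequalities).
   Context: For a graph $G=([n],E)$ and $w\in\mathbb{R}^E$, let $\mathrm{ip}(G,w)=\max_{x\in\{\pm1\}^n}\sum_{ij\in E}w_{ij}x_ix_j$ and $\mathrm{sdp}(G,w)=\max\sum_{ij\in E}w_{ij}u_i^Tu_j$, the maximum over unit vectors $u_1,\dots,u_n\in\mathbb{R}^n$; $\kappa(G,w)=\mathrm{sdp}(G,w)/\mathrm{ip}(G,w)$ and $\kappa(G)=\sup_{w\in\mathbb{R}^E}\kappa(G,w)$. $\mathrm{CUT}(G)$ is the projection onto the edge coordinates $\mathbb{R}^E$ of $\mathrm{conv}\{xx^T : x\in\{\pm1\}^n\}$; the origin lies in its interior, so its facets can be written as $w^Tx\le 1$. The switching of $w\in\mathbb{R}^E$ by $S\subseteq[n]$ is the vector $w^{(S)}$ with $w^{(S)}_{ij}=-w_{ij}$ if exactly one of $i,j$ lies in $S$, and $w^{(S)}_{ij}=w_{ij}$ otherwise. *)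

theory Defs
  imports "HOL-Analysis.Analysis"
begin

text \<open>Graphs on a finite vertex type 'n (so n = CARD('n), vertices play the role of [n]);
  edges are 2-element vertex sets. Vectors in R^E are represented in the Euclidean space
  real^('n set), with all coordinates outside E equal to zero.\<close>

definition ends :: "'n set \<Rightarrow> 'n \<times> 'n" where
  "ends e = (SOME p. e = {fst p, snd p} \<and> fst p \<noteq> snd p)"

definition RE :: "'n::finite set set \<Rightarrow> (real^('n set)) set" where
  "RE E = {w. \<forall>e. e \<notin> E \<longrightarrow> w $ e = 0}"

definition ip :: "'n::finite set set \<Rightarrow> real^('n set) \<Rightarrow> real" where
  "ip E w = Max {(\<Sum>e\<in>E. w $ e * x (fst (ends e)) * x (snd (ends e))) | x :: 'n \<Rightarrow> real.
                    \<forall>i. x i \<in> {-1, 1}}"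

definition sdp :: "'n::finite set set \<Rightarrow> real^('n set) \<Rightarrow> real" where
  "sdp E w = Sup {(\<Sum>e\<in>E. w $ e * (u (fst (ends e)) \<bullet> u (snd (ends e)))) | u :: 'n \<Rightarrow> real^'n.
                    \<forall>i. norm (u i) = 1}"

definition kappa_w :: "'n::finite set set \<Rightarrow> real^('n set) \<Rightarrow> real" where
  "kappa_w E w = sdp E w / ip E w"

definition kappa :: "'n::finite set set \<Rightarrow> ereal" where
  "kappa E = (SUP w\<in>RE E. ereal (kappa_w E w))"

definition cutvec :: "'n::finite set set \<Rightarrow> ('n \<Rightarrow> real) \<Rightarrow> real^('n set)" where
  "cutvec E x = (\<chi> e. if e \<in> E then x (fst (ends e)) * x (snd (ends e)) else 0)"

definition CUT :: "'n::finite set set \<Rightarrow> (real^('n set)) set" where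
  "CUT E = convex hull {cutvec E x | x. \<forall>i. x i \<in> {-1, 1}}"

definition facets :: "'n::finite set set \<Rightarrow> (real^('n set)) set" where
  "facets E = {w \<in> RE E. (\<forall>y\<in>CUT E. w \<bullet> y \<le> 1) \<and> {y \<in> CUT E. w \<bullet> y = 1} facet_of CUT E}"

definition switch :: "'n::finite set \<Rightarrow> real^('n set) \<Rightarrow> real^('n set)" where
  "switch S w = (\<chi> e. if card (e \<inter> S) = 1 then - (w $ e) else w $ e)"

end

theory Submission
  imports Defs
begin

definition sg :: "'n set \<Rightarrow> 'n \<Rightarrow> real" where "sg S k = (if k \<in> S then -1 else 1)"

lemma ends_prop:
  assumes "card e = 2"
  shows "e = {fst (ends e), snd (ends e)} \<and> fst (ends e) \<noteq> snd (ends e)"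
proof -
  from assms obtain a b where "e = {a,b}" "a \<noteq> b" by (meson card_2_iff)
  then have "\<exists>p. e = {fst p, snd p} \<and> fst p \<noteq> snd p" by (intro exI[of _ "(a,b)"]) auto
  then show ?thesis unfolding ends_def by (rule someI_ex)
qed

lemma ends_cases:
  assumes "card e = 2" "e = {a,b}"
  shows "(fst (ends e) = a \<and> snd (ends e) = b) \<or> (fst (ends e) = b \<and> snd (ends e) = a)"
  using ends_prop[OF assms(1)] assms(2) by (metis doubleton_eq_iff)

lemma ends_mult:
  fixes x :: "'a \<Rightarrow> 'b::comm_semiring_1"
  assumes "card e = 2" "e = {a,b}"
  shows "x (fst (ends e)) * x (snd (ends e)) = x a * x b"
  using ends_cases[OF assms] by (auto simp: mult.commute)

lemma ends_inner:
  fixes u :: "'a \<Rightarrow> 'b::real_inner"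
  assumes "card e = 2" "e = {a,b}"
  shows "u (fst (ends e)) \<bullet> u (snd (ends e)) = u a \<bullet> u b"
  using ends_cases[OF assms] by (auto simp: inner_commute)

lemma signs_eq: "{x::'n\<Rightarrow>real. \<forall>i. x i \<in> {-1,1}} = range sg"
proof (intro set_eqI iffI)
  fix x :: "'n \<Rightarrow> real" assume "x \<in> {x. \<forall>i. x i \<in> {-1,1}}"
  then have "x = sg {i. x i = -1}" by (force simp: sg_def fun_eq_iff)
  then show "x \<in> range sg" by blast
qed (auto simp: sg_def split: if_splits)

lemma sg_sq [simp]: "sg S k * sg S k = 1" by (simp add: sg_def)

definition gens :: "'n::finite set set \<Rightarrow> (real^('n set)) set" where
  "gens E = {cutvec E x | x. \<forall>i. x i \<in> {-1, 1}}"

lemma gens_eq: "gens E = range (\<lambda>S. cutvec E (sg S))"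
proof -
  have "gens E = cutvec E ` {x. \<forall>i. x i \<in> {-1, 1}}" unfolding gens_def by blast
  then show ?thesis unfolding signs_eq by (simp add: image_image)
qed

lemma finite_gens: "finite (gens E)" unfolding gens_eq by simp

lemma CUT_hull: "CUT E = convex hull (gens E)" unfolding CUT_def gens_def ..

lemma polytope_CUT: "polytope (CUT E)"
  unfolding CUT_hull polytope_def using finite_gens by blast

lemma finite_E: "finite (E :: 'n::finite set set)" by simp

lemma inner_cutvec: "w \<bullet> cutvec E x = (\<Sum>e\<in>E. w $ e * x (fst (ends e)) * x (snd (ends e)))"
  unfolding inner_vec_def cutvec_def
  by (simp add: if_distrib sum.If_cases mult.assoc)

definition gram :: "'n::finite set set \<Rightarrow> ('n \<Rightarrow> real^'n) \<Rightarrow> real^('n set)" where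
  "gram E u = (\<chi> e. if e \<in> E then u (fst (ends e)) \<bullet> u (snd (ends e)) else 0)"

lemma inner_gram: "w \<bullet> gram E u = (\<Sum>e\<in>E. w $ e * (u (fst (ends e)) \<bullet> u (snd (ends e))))"
  unfolding inner_vec_def gram_def
  by (simp add: if_distrib sum.If_cases)

lemma RE_subspace: "subspace (RE E)"
  unfolding subspace_def RE_def by auto

lemma gens_RE: "gens E \<subseteq> RE E"
  unfolding gens_def RE_def cutvec_def by auto

lemma CUT_RE: "CUT E \<subseteq> RE E"
  unfolding CUT_hull by (rule hull_minimal[OF gens_RE]) (simp add: RE_subspace subspace_imp_convex)

lemma gram_RE: "gram E u \<in> RE E"
  unfolding gram_def RE_def by auto

lemma vecI: "(\<And>i. x $ i = y $ i) \<Longrightarrow> x = y" by (simp add: vec_eq_iff)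

lemma cutvec_at:
  assumes "f \<in> E" "card f = 2" "f = {k,l}"
  shows "cutvec E x $ f = x k * x l"
  using assms ends_mult[OF assms(2,3)] by (simp add: cutvec_def)

lemma sum_sg_zero:
  assumes "i \<noteq> j"
  shows "(\<Sum>S\<in>(UNIV::'n::finite set set). sg S i * sg S j) = 0"
proof -
  define h where "h S = (if i \<in> S then S - {i} else insert i S)" for S :: "'n set"
  have hh: "h (h S) = S" for S unfolding h_def by auto
  have neg: "sg (h S) i * sg (h S) j = - (sg S i * sg S j)" for S
    using assms unfolding h_def sg_def by auto
  have "(\<Sum>S\<in>UNIV. sg S i * sg S j) = (\<Sum>S\<in>UNIV. sg (h S) i * sg (h S) j)"
    by (rule sum.reindex_bij_witness[of _ h h]) (auto simp: hh)
  also have "\<dots> = - (\<Sum>S\<in>UNIV. sg S i * sg S j)" by (simp add: neg sum_negf)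
  finally show ?thesis by simp
qed

lemma sum_gens_zero:
  assumes "\<forall>e\<in>E. card e = 2"
  shows "(\<Sum>S\<in>(UNIV::'n::finite set set). cutvec E (sg S)) = 0"
proof (rule vecI)
  fix f :: "'n set"
  show "(\<Sum>S\<in>UNIV. cutvec E (sg S)) $ f = 0 $ f"
  proof (cases "f \<in> E")
    case True
    then have c: "card f = 2" using assms by auto
    from ends_prop[OF c] obtain k l where kl: "f = {k,l}" "k \<noteq> l" by blast
    have "(\<Sum>S\<in>UNIV. cutvec E (sg S)) $ f = (\<Sum>S\<in>UNIV. sg S k * sg S l)"
      unfolding sum_component using cutvec_at[OF True c kl(1)] by simp
    also have "\<dots> = 0" using sum_sg_zero[OF kl(2)] .
    finally show ?thesis by simp
  next
    case False
    then show ?thesis unfolding sum_component by (simp add: cutvec_def)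
  qed
qed

lemma gens_in_CUT: "cutvec E (sg S) \<in> CUT E"
  unfolding CUT_hull gens_eq by (rule hull_inc) simp

lemma zero_in_CUT:
  assumes "\<forall>e\<in>E. card e = 2"
  shows "(0::real^('n::finite set)) \<in> CUT E"
proof -
  define N where "N = real (card (UNIV::'n set set))"
  have N: "N > 0" unfolding N_def by (simp add: card_gt_0_iff)
  have "(\<Sum>S\<in>(UNIV::'n set set). (1/N) *\<^sub>R cutvec E (sg S)) \<in> CUT E"
    by (rule convex_sum) (use N gens_in_CUT in \<open>auto simp: N_def CUT_hull\<close>)
  moreover have "(\<Sum>S\<in>(UNIV::'n set set). (1/N) *\<^sub>R cutvec E (sg S)) = 0"
    by (simp add: scaleR_sum_right[symmetric] sum_gens_zero[OF assms])
  ultimately show ?thesis by simp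
qed

lemma axis_span:
  assumes "\<forall>e\<in>E. card e = 2" "e \<in> E"
  shows "axis e 1 \<in> span (gens E)"
proof -
  have c: "card e = 2" using assms by auto
  from ends_prop[OF c] obtain i j where ij: "e = {i,j}" "i \<noteq> j" by blast
  define c where "c S = cutvec E (sg S)" for S
  have cg: "c S \<in> span (gens E)" for S unfolding c_def gens_eq by (rule span_base) simp
  have eq: "axis e 1 = (1/4) *\<^sub>R (c {} - c {i} - c {j} + c {i,j})"
  proof (rule vecI)
    fix f
    show "axis e 1 $ f = ((1/4) *\<^sub>R (c {} - c {i} - c {j} + c {i,j})) $ f"
    proof (cases "f \<in> E")
      case True
      then have cf: "card f = 2" using assms by auto
      from ends_prop[OF cf] obtain k l where kl: "f = {k,l}" "k \<noteq> l" by blast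
      show ?thesis unfolding c_def using cutvec_at[OF True cf kl(1)] kl ij
        by (auto simp: axis_def sg_def doubleton_eq_iff)
    next
      case False
      then have "f \<noteq> e" using assms by auto
      then show ?thesis using False unfolding c_def by (simp add: axis_def cutvec_def)
    qed
  qed
  show ?thesis unfolding eq
    by (intro span_mul span_add span_diff cg)
qed

lemma RE_span:
  assumes "\<forall>e\<in>E. card e = 2"
  shows "RE E \<subseteq> span (gens E)"
proof
  fix y assume y: "y \<in> RE E"
  have "y = (\<Sum>e\<in>E. (y $ e) *\<^sub>R axis e 1)"
  proof (rule vecI)
    fix f
    show "y $ f = (\<Sum>e\<in>E. (y $ e) *\<^sub>R axis e 1) $ f"
    proof -
      have "(\<Sum>e\<in>E. (y $ e) *\<^sub>R axis e 1) $ f = (\<Sum>x\<in>E. if f = x then y $ f else 0)"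
        unfolding sum_component by (rule sum.cong) (auto simp: axis_def)
      then show ?thesis using y by (auto simp: RE_def sum.delta sum.delta')
    qed
  qed
  also have "\<dots> \<in> span (gens E)"
    by (intro span_sum span_mul axis_span[OF assms])
  finally show "y \<in> span (gens E)" .
qed

lemma RE_aff:
  assumes "\<forall>e\<in>E. card e = 2"
  shows "RE E \<subseteq> affine hull (CUT E)"
proof -
  have "affine hull (CUT E) = span (CUT E)"
    by (rule affine_hull_span_0) (rule hull_inc[OF zero_in_CUT[OF assms]])
  moreover have "span (gens E) \<subseteq> span (CUT E)"
    unfolding CUT_hull by (rule span_mono) (rule hull_subset)
  ultimately show ?thesis using RE_span[OF assms] by auto
qed

lemma ip_set_eq:
  "{(\<Sum>e\<in>E. w $ e * x (fst (ends e)) * x (snd (ends e))) | x :: 'n::finite \<Rightarrow> real.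
      \<forall>i. x i \<in> {-1, 1}} = (\<lambda>S. w \<bullet> cutvec E (sg S)) ` UNIV"
proof -
  have "{(\<Sum>e\<in>E. w $ e * x (fst (ends e)) * x (snd (ends e))) | x :: 'n::finite \<Rightarrow> real.
      \<forall>i. x i \<in> {-1, 1}} = (\<lambda>x. w \<bullet> cutvec E x) ` {x. \<forall>i. x i \<in> {-1, 1}}"
    by (auto simp: inner_cutvec)
  then show ?thesis unfolding signs_eq by (simp add: image_image)
qed

lemma ip_alt: "ip E w = Max ((\<lambda>S. w \<bullet> cutvec E (sg S)) ` UNIV)"
  unfolding ip_def ip_set_eq ..

lemma ip_upper: "w \<bullet> cutvec E (sg S) \<le> ip E w"
  unfolding ip_alt by (rule Max_ge) auto

lemma ip_attained: "\<exists>S. ip E w = w \<bullet> cutvec E (sg S)"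
proof -
  have "ip E w \<in> (\<lambda>S. w \<bullet> cutvec E (sg S)) ` UNIV"
    unfolding ip_alt by (rule Max_in) auto
  then show ?thesis by auto
qed

lemma ip_CUT: "y \<in> CUT E \<Longrightarrow> w \<bullet> y \<le> ip E w"
proof -
  assume "y \<in> CUT E"
  moreover have "CUT E \<subseteq> {y. w \<bullet> y \<le> ip E w}"
    unfolding CUT_hull
    by (rule hull_minimal) (auto simp: gens_eq ip_upper convex_halfspace_le)
  ultimately show ?thesis by auto
qed

lemma ip_nonneg:
  assumes "\<forall>e\<in>E. card e = 2"
  shows "0 \<le> ip E w"
  using ip_CUT[OF zero_in_CUT[OF assms], of w] by simp

lemma sdp_set_eq:
  "{(\<Sum>e\<in>E. w $ e * (u (fst (ends e)) \<bullet> u (snd (ends e)))) | u :: 'n::finite \<Rightarrow> real^'n.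
      \<forall>i. norm (u i) = 1} = (\<lambda>u. w \<bullet> gram E u) ` {u. \<forall>i. norm (u i) = 1}"
  by (auto simp: inner_gram)

lemma sdp_alt: "sdp E w = Sup ((\<lambda>u. w \<bullet> gram E u) ` {u. \<forall>i. norm (u i) = 1})"
  unfolding sdp_def sdp_set_eq ..

lemma gram_bound: "(\<forall>i. norm (u i) = 1) \<Longrightarrow> w \<bullet> gram E u \<le> (\<Sum>e\<in>E. \<bar>w $ e\<bar>)"
proof -
  assume u: "\<forall>i. norm (u i) = 1"
  have "w $ e * (u (fst (ends e)) \<bullet> u (snd (ends e))) \<le> \<bar>w $ e\<bar>" for e
  proof -
    have "\<bar>u (fst (ends e)) \<bullet> u (snd (ends e))\<bar> \<le> 1"
      using Cauchy_Schwarz_ineq2[of "u (fst (ends e))" "u (snd (ends e))"] u by simp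
    then have "\<bar>w $ e * (u (fst (ends e)) \<bullet> u (snd (ends e)))\<bar> \<le> \<bar>w $ e\<bar>"
      by (simp add: abs_mult mult_left_le)
    then show ?thesis by linarith
  qed
  then show ?thesis unfolding inner_gram by (intro sum_mono) auto
qed

lemma unit_exists: "(\<lambda>i. axis k 1) \<in> {u :: 'n::finite \<Rightarrow> real^'n. \<forall>i. norm (u i) = 1}"
  by simp

lemma sdp_upper: "(\<forall>i. norm (u i) = 1) \<Longrightarrow> w \<bullet> gram E u \<le> sdp E w"
  unfolding sdp_alt
  by (rule cSup_upper) (auto simp: bdd_above_def intro!: exI[of _ "\<Sum>e\<in>E. \<bar>w $ e\<bar>"] gram_bound)

lemma sdp_least:
  assumes "\<And>u. (\<forall>i. norm (u i) = 1) \<Longrightarrow> w \<bullet> gram E u \<le> c"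
  shows "sdp E w \<le> c"
  unfolding sdp_alt
proof (rule cSup_least)
  show "(\<lambda>u. w \<bullet> gram E u) ` {u. \<forall>i. norm (u i) = 1} \<noteq> {}" by (auto intro!: exI[of _ "\<lambda>i. axis undefined (1::real)"])
qed (use assms in blast)

lemma ip_le_sdp: "ip E w \<le> sdp E (w::real^('n::finite set))"
proof -
  obtain S where S: "ip E w = w \<bullet> cutvec E (sg S)" using ip_attained by blast
  obtain k :: 'n where True by blast
  define u where "u i = sg S i *\<^sub>R (axis k 1 :: real^'n)" for i
  have un: "\<forall>i. norm (u i) = 1" unfolding u_def by (simp add: sg_def)
  have ip: "u i \<bullet> u j = sg S i * sg S j" for i j
    unfolding u_def by (simp add: inner_axis_axis)
  have "gram E u = cutvec E (sg S)"
    unfolding gram_def cutvec_def ip ..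
  then show ?thesis using S sdp_upper[OF un, where E=E and w=w] by simp
qed

lemma switch_at:
  assumes "\<forall>e\<in>E. card e = 2" "e \<in> E"
  shows "switch S w $ e = w $ e * (sg S (fst (ends e)) * sg S (snd (ends e)))"
proof -
  have c: "card e = 2" using assms by auto
  define a where "a = fst (ends e)"
  define b where "b = snd (ends e)"
  have ab: "e = {a,b}" "a \<noteq> b" using ends_prop[OF c] unfolding a_def b_def by auto
  have "card (e \<inter> S) = 1 \<longleftrightarrow> (a \<in> S) \<noteq> (b \<in> S)"
    using ab by (cases "a \<in> S"; cases "b \<in> S") (auto simp: Int_insert_left)
  then show ?thesis unfolding switch_def a_def[symmetric] b_def[symmetric]
    by (auto simp: sg_def)
qed

definition symd :: "'n set \<Rightarrow> 'n set \<Rightarrow> 'n set" where "symd S T = (S - T) \<union> (T - S)"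

lemma symd_inv: "symd S (symd S T) = T" unfolding symd_def by auto

lemma sg_symd: "sg S k * sg T k = sg (symd S T) k" unfolding sg_def symd_def by auto

lemma switch_cutvec:
  assumes "\<forall>e\<in>E. card e = 2"
  shows "switch S w \<bullet> cutvec E (sg T) = w \<bullet> cutvec E (sg (symd S T))"
  unfolding inner_cutvec
proof (rule sum.cong[OF refl])
  fix e assume "e \<in> E"
  then show "switch S w $ e * sg T (fst (ends e)) * sg T (snd (ends e)) =
        w $ e * sg (symd S T) (fst (ends e)) * sg (symd S T) (snd (ends e))"
    using switch_at[OF assms] by (simp add: sg_symd[symmetric] algebra_simps)
qed

lemma ip_switch:
  assumes "\<forall>e\<in>E. card e = 2"
  shows "ip E (switch S w) = ip E w"
proof -
  have "(\<lambda>T. switch S w \<bullet> cutvec E (sg T)) ` UNIV = (\<lambda>T. w \<bullet> cutvec E (sg T)) ` (symd S ` UNIV)"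
    unfolding switch_cutvec[OF assms] by (simp add: image_image)
  also have "symd S ` UNIV = UNIV" by (metis surjI symd_inv)
  finally show ?thesis unfolding ip_alt by simp
qed

lemma switch_gram:
  assumes "\<forall>e\<in>E. card e = 2"
  shows "switch S w \<bullet> gram E u = w \<bullet> gram E (\<lambda>i. sg S i *\<^sub>R u i)"
  unfolding inner_gram
proof (rule sum.cong[OF refl])
  fix e assume "e \<in> E"
  then show "switch S w $ e * (u (fst (ends e)) \<bullet> u (snd (ends e))) =
        w $ e * (sg S (fst (ends e)) *\<^sub>R u (fst (ends e)) \<bullet> sg S (snd (ends e)) *\<^sub>R u (snd (ends e)))"
    using switch_at[OF assms] by (simp add: algebra_simps)
qed

lemma sdp_switch:
  assumes "\<forall>e\<in>E. card e = 2"
  shows "sdp E (switch S w) = sdp E w"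
proof -
  define U where "U = {u :: 'a \<Rightarrow> real^'a. \<forall>i. norm (u i) = 1}"
  define h where "h u = (\<lambda>i. sg S i *\<^sub>R u i)" for u :: "'a \<Rightarrow> real^'a"
  have hh: "h (h u) = u" for u unfolding h_def by (simp add: fun_eq_iff)
  have hU: "h ` U = U"
  proof
    show "h ` U \<subseteq> U" unfolding h_def U_def by (auto simp: sg_def)
    then show "U \<subseteq> h ` U" using hh by (metis image_eqI subsetD subsetI)
  qed
  have "(\<lambda>u. switch S w \<bullet> gram E u) ` U = (\<lambda>u. w \<bullet> gram E u) ` (h ` U)"
    unfolding switch_gram[OF assms] h_def by (simp add: image_image)
  then show ?thesis unfolding sdp_alt U_def[symmetric] hU by simp
qed

lemma kappa_switch:
  assumes "\<forall>e\<in>E. card e = 2"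
  shows "kappa_w E (switch S w) = kappa_w E w"
  unfolding kappa_w_def ip_switch[OF assms] sdp_switch[OF assms] ..

lemma key:
  assumes cards: "\<forall>e\<in>E. card e = 2" and ne: "E \<noteq> {}"
  shows "facets E \<noteq> {} \<and> (\<forall>y\<in>RE E. (\<forall>f\<in>facets E. f \<bullet> y \<le> 1) \<longrightarrow> y \<in> CUT E)"
proof -
  have "polyhedron (CUT E)" by (rule polytope_imp_polyhedron[OF polytope_CUT])
  then obtain F where F: "finite F" and seq: "CUT E = affine hull (CUT E) \<inter> \<Inter>F"
    and hF: "\<forall>h \<in> F. \<exists>a b. a \<noteq> 0 \<and> h = {x. a \<bullet> x \<le> b}"
    and psub: "\<And>F'. F' \<subset> F \<Longrightarrow> CUT E \<subset> affine hull (CUT E) \<inter> \<Inter>F'"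
    unfolding polyhedron_Int_affine_minimal by blast
  from hF obtain a b where faceq: "\<And>h. h \<in> F \<Longrightarrow> a h \<noteq> 0 \<and> h = {x. a h \<bullet> x \<le> b h}"
    by metis
  have facet: "CUT E \<inter> {x. a h \<bullet> x = b h} facet_of CUT E" if "h \<in> F" for h
    using facet_of_polyhedron_explicit[OF F seq faceq psub] that by blast
  have inh: "y \<in> CUT E \<Longrightarrow> h \<in> F \<Longrightarrow> a h \<bullet> y \<le> b h" for y h
    using seq faceq by blast
  have bpos: "b h > 0" if h: "h \<in> F" for h
  proof -
    have "0 \<le> b h" using inh[OF zero_in_CUT[OF cards] h] by simp
    moreover have "b h \<noteq> 0"
    proof
      assume b0: "b h = 0"
      define C where "C = CUT E \<inter> {x. a h \<bullet> x = b h}"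
      have fC: "C facet_of CUT E" using facet[OF h] unfolding C_def .
      have le: "a h \<bullet> cutvec E (sg T) \<le> 0" for T using inh[OF gens_in_CUT h] b0 by simp
      have "(\<Sum>T\<in>(UNIV::'a set set). a h \<bullet> cutvec E (sg T)) = 0"
        using sum_gens_zero[OF cards] by (simp add: inner_sum_right[symmetric])
      then have "(\<Sum>T\<in>(UNIV::'a set set). - (a h \<bullet> cutvec E (sg T))) = 0"
        by (simp add: sum_negf)
      then have "\<forall>T\<in>UNIV. - (a h \<bullet> cutvec E (sg T)) = 0"
        using sum_nonneg_eq_0_iff[of UNIV "\<lambda>T. - (a h \<bullet> cutvec E (sg T))"] le by auto
      then have "gens E \<subseteq> C" unfolding C_def gens_eq using b0 gens_in_CUT by auto
      moreover have "convex C" using fC unfolding facet_of_def by (auto dest: face_of_imp_convex)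
      ultimately have "CUT E \<subseteq> C" unfolding CUT_hull by (rule hull_minimal)
      then have "C = CUT E" unfolding C_def by auto
      then show False using fC unfolding facet_of_def by simp
    qed
    ultimately show ?thesis by simp
  qed
  define fw where "fw h = (\<chi> e. if e \<in> E then a h $ e / b h else 0)" for h
  have fw_inner: "fw h \<bullet> y = (a h \<bullet> y) / b h" if "y \<in> RE E" for h y
  proof -
    have "fw h \<bullet> y = (\<Sum>e\<in>UNIV. a h $ e * y $ e / b h)"
      unfolding inner_vec_def fw_def using that by (intro sum.cong) (auto simp: RE_def)
    also have "\<dots> = (a h \<bullet> y) / b h" unfolding inner_vec_def by (simp add: sum_divide_distrib)
    finally show ?thesis .
  qed
  have fw_facets: "fw h \<in> facets E" if h: "h \<in> F" for h
  proof -
    have R: "fw h \<in> RE E" unfolding fw_def RE_def by auto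
    have le1: "fw h \<bullet> y \<le> 1" if "y \<in> CUT E" for y
      using fw_inner[OF subsetD[OF CUT_RE that]] inh[OF that h] bpos[OF h] by simp
    have eqset: "{y \<in> CUT E. fw h \<bullet> y = 1} = CUT E \<inter> {x. a h \<bullet> x = b h}"
    proof (rule set_eqI)
      fix y
      show "y \<in> {y \<in> CUT E. fw h \<bullet> y = 1} \<longleftrightarrow> y \<in> CUT E \<inter> {x. a h \<bullet> x = b h}"
      proof (cases "y \<in> CUT E")
        case True
        have "fw h \<bullet> y = a h \<bullet> y / b h" by (rule fw_inner[OF subsetD[OF CUT_RE True]])
        then show ?thesis using True bpos[OF h] by (auto simp: divide_eq_1_iff)
      qed simp
    qed
    have "{y \<in> CUT E. fw h \<bullet> y = 1} facet_of CUT E" using facet[OF h] unfolding eqset .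
    then have "fw h \<in> RE E \<and> (\<forall>y\<in>CUT E. fw h \<bullet> y \<le> 1) \<and> {y \<in> CUT E. fw h \<bullet> y = 1} facet_of CUT E"
      using R le1 by blast
    then show ?thesis unfolding facets_def by blast
  qed
  have Fne: "F \<noteq> {}"
  proof
    assume "F = {}"
    then have all: "RE E \<subseteq> CUT E" using seq RE_aff[OF cards] by auto
    obtain e where e: "e \<in> E" using ne by auto
    define v :: "real^('a set)" where "v = axis e 1"
    define t where "t = ip E v + 1"
    have "t *\<^sub>R v \<in> RE E" using e unfolding RE_def v_def by (auto simp: axis_def)
    then have "v \<bullet> (t *\<^sub>R v) \<le> ip E v" using all ip_CUT by blast
    moreover have "v \<bullet> (t *\<^sub>R v) = t" unfolding v_def by (simp add: inner_axis)
    ultimately show False using t_def by linarith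
  qed
  have "facets E \<noteq> {}" using Fne fw_facets by blast
  moreover have "y \<in> CUT E" if y: "y \<in> RE E" and yf: "\<forall>f\<in>facets E. f \<bullet> y \<le> 1" for y
  proof -
    have "y \<in> h" if h: "h \<in> F" for h
    proof -
      have "fw h \<bullet> y \<le> 1" using yf fw_facets[OF h] by blast
      then have "a h \<bullet> y \<le> b h" using fw_inner[OF y] bpos[OF h] by (simp add: divide_le_eq)
      then show ?thesis using faceq[OF h] by blast
    qed
    then show ?thesis using seq RE_aff[OF cards] y by blast
  qed
  ultimately show ?thesis by blast
qed

lemma facet_ip:
  assumes "f \<in> facets E"
  shows "ip E f = 1"
proof -
  from assms have le: "\<forall>y\<in>CUT E. f \<bullet> y \<le> 1" and fc: "{y \<in> CUT E. f \<bullet> y = 1} facet_of CUT E"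
    unfolding facets_def by auto
  obtain S where S: "ip E f = f \<bullet> cutvec E (sg S)" using ip_attained by blast
  have "ip E f \<le> 1" using S le gens_in_CUT by auto
  moreover obtain y where y: "y \<in> CUT E" "f \<bullet> y = 1" using fc unfolding facet_of_def by auto
  then have "1 \<le> ip E f" using ip_CUT[OF y(1), of f] by simp
  ultimately show ?thesis by simp
qed

lemma kappa_facet:
  assumes "f \<in> facets E" shows "kappa_w E f = sdp E f"
  unfolding kappa_w_def facet_ip[OF assms] by simp

lemma bound:
  assumes cards: "\<forall>e\<in>E. card e = 2" and ne: "E \<noteq> {}" and w: "w \<in> RE E"
  shows "ereal (kappa_w E w) \<le> (SUP f\<in>facets E. ereal (kappa_w E f))"
proof -
  define M where "M = (SUP f\<in>facets E. ereal (kappa_w E f))"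
  from key[OF cards ne] have fne: "facets E \<noteq> {}"
    and inC: "\<And>y. y \<in> RE E \<Longrightarrow> (\<forall>f\<in>facets E. f \<bullet> y \<le> 1) \<Longrightarrow> y \<in> CUT E" by auto
  obtain f0 where f0: "f0 \<in> facets E" using fne by auto
  have upper: "ereal (kappa_w E f) \<le> M" if "f \<in> facets E" for f
    unfolding M_def using that by (rule SUP_upper)
  have "ereal 1 \<le> M"
    using upper[OF f0] kappa_facet[OF f0] ip_le_sdp[of E f0] facet_ip[OF f0]
    by (metis ereal_less_eq(3) order_trans)
  show ?thesis
  proof (cases M)
    case PInf then show ?thesis unfolding M_def[symmetric] by simp
  next
    case MInf then show ?thesis using \<open>ereal 1 \<le> M\<close> by simp
  next
    case (real m)
    have m1: "1 \<le> m" using \<open>ereal 1 \<le> M\<close> real by simp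
    have sdpf: "sdp E f \<le> m" if "f \<in> facets E" for f
      using upper[OF that] real kappa_facet[OF that] by simp
    have "kappa_w E w \<le> m"
    proof (cases "ip E w = 0")
      case True then show ?thesis using m1 unfolding kappa_w_def by simp
    next
      case False
      then have ipos: "ip E w > 0" using ip_nonneg[OF cards, of w] by simp
      have "sdp E w \<le> m * ip E w"
      proof (rule sdp_least)
        fix u :: "'a \<Rightarrow> real^'a" assume u: "\<forall>i. norm (u i) = 1"
        define Y where "Y = (1/m) *\<^sub>R gram E u"
        have YR: "Y \<in> RE E" unfolding Y_def
          using gram_RE[of E u] RE_subspace[of E] by (simp add: subspace_scale)
        have "f \<bullet> Y \<le> 1" if "f \<in> facets E" for f
        proof -
          have "f \<bullet> gram E u \<le> m" using sdp_upper[OF u, of f E] sdpf[OF that] by simp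
          then show ?thesis unfolding Y_def using m1 by (simp add: divide_le_eq)
        qed
        then have "Y \<in> CUT E" using inC[OF YR] by blast
        then have "w \<bullet> Y \<le> ip E w" by (rule ip_CUT)
        moreover have "w \<bullet> gram E u = m * (w \<bullet> Y)" unfolding Y_def using m1 by simp
        ultimately show "w \<bullet> gram E u \<le> m * ip E w" using m1 by (simp add: mult_left_mono)
      qed
      then show ?thesis unfolding kappa_w_def using ipos by (simp add: divide_le_eq)
    qed
    then show ?thesis unfolding M_def[symmetric] using real by simp
  qed
qed

theorem mainTheorem2:
  fixes E :: "'n::finite set set"
  assumes "\<forall>e\<in>E. card e = 2"
    and "E \<noteq> {}"
  shows "kappa E = (SUP w\<in>facets E. ereal (kappa_w E w)) \<and>
         (\<forall>R. R \<subseteq> facets E \<and> (\<forall>w\<in>facets E. \<exists>S. switch S w \<in> R)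
              \<longrightarrow> kappa E = (SUP w\<in>R. ereal (kappa_w E w)))"
proof -
  have fRE: "facets E \<subseteq> RE E" unfolding facets_def by auto
  have eq1: "kappa E = (SUP w\<in>facets E. ereal (kappa_w E w))"
  proof (rule antisym)
    show "kappa E \<le> (SUP w\<in>facets E. ereal (kappa_w E w))"
      unfolding kappa_def by (rule SUP_least) (rule bound[OF assms])
    show "(SUP w\<in>facets E. ereal (kappa_w E w)) \<le> kappa E"
      unfolding kappa_def by (rule SUP_subset_mono[OF fRE]) simp
  qed
  have "kappa E = (SUP w\<in>R. ereal (kappa_w E w))"
    if R: "R \<subseteq> facets E" and sw: "\<forall>w\<in>facets E. \<exists>S. switch S w \<in> R" for R
  proof -
    have "(SUP w\<in>R. ereal (kappa_w E w)) \<le> (SUP w\<in>facets E. ereal (kappa_w E w))"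
      by (rule SUP_subset_mono[OF R]) simp
    moreover have "(SUP w\<in>facets E. ereal (kappa_w E w)) \<le> (SUP w\<in>R. ereal (kappa_w E w))"
    proof (rule SUP_least)
      fix w assume "w \<in> facets E"
      then obtain S where S: "switch S w \<in> R" using sw by blast
      have "ereal (kappa_w E (switch S w)) \<le> (SUP w\<in>R. ereal (kappa_w E w))"
        by (rule SUP_upper[OF S])
      then show "ereal (kappa_w E w) \<le> (SUP w\<in>R. ereal (kappa_w E w))"
        using kappa_switch[OF assms(1)] by simp
    qed
    ultimately show ?thesis using eq1 by simp
  qed
  then show ?thesis using eq1 by blast
qed

end
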